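(* Let $\sigma\colon\mathcal{A}^+\to\mathcal{B}^+$ be a morphism, $u,v\in\mathcal{A}^+$, let $a,b$ be the first letters of $u,v$ respectively, and let $\sigma(a)=st$ with $t$ nonempty (and $s$ possibly empty). Assume that $\sigma(u)$ is a prefix of $s\sigma(v)$, that $|u|\ge|\sigma|_1+|s|$, and that either ($s$ is empty and $a\neq b$) or $s$ is nonempty. Then there exist an alphabet $\mathcal{C}$ and morphisms $q\colon\mathcal{A}^+\to\mathcal{C}^+$, $p\colon\mathcal{C}^+\to\mathcal{B}^+$ such that $\#\mathcal{C}\le\#\mathcal{A}$, $q$ is letter-onto, $|p|_1<|\sigma|_1$, and $\sigma=pq$.
   Context: Alphabets are finite sets; $\mathcal{A}^+$ is the free semigroup of nonempty finite words over $\mathcal{A}$; a morphism is a semigroup homomorphism. For a morphism $\sigma\colon\mathcal{A}^+\to\mathcal{B}^+$, $|\sigma|_1=\sum_{a\in\mathcal{A}}|\sigma(a)|$. A word $w$ is a prefix of $w'$ if $w'=wr$ for some possibly empty word $r$. $q$ is letter-onto if every letter of its target alphabet occurs in some $q(a)$. *)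

theory Defs
  imports Main "HOL-Library.Sublist"
begin

text \<open>A morphism A+ -> B+ is given by its letter images, which are nonempty words over B.\<close>
definition morphism :: "'a set \<Rightarrow> 'b set \<Rightarrow> ('a \<Rightarrow> 'b list) \<Rightarrow> bool" where
  "morphism A B f \<longleftrightarrow> finite A \<and> finite B \<and> (\<forall>x\<in>A. f x \<noteq> [] \<and> set (f x) \<subseteq> B)"

definition ext :: "('a \<Rightarrow> 'b list) \<Rightarrow> 'a list \<Rightarrow> 'b list" where
  "ext f w = concat (map f w)"

definition size1 :: "'a set \<Rightarrow> ('a \<Rightarrow> 'b list) \<Rightarrow> nat" where
  "size1 A f = (\<Sum>x\<in>A. length (f x))"

definition letter_onto :: "'a set \<Rightarrow> 'c set \<Rightarrow> ('a \<Rightarrow> 'c list) \<Rightarrow> bool" where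
  "letter_onto A C q \<longleftrightarrow> (\<forall>c\<in>C. \<exists>x\<in>A. c \<in> set (q x))"

end

theory Submission
  imports Defs
begin

lemma ext_simps[simp]:
  "ext f [] = []" "ext f (x # w) = f x @ ext f w" "ext f (w1 @ w2) = ext f w1 @ ext f w2"
  by (simp_all add: ext_def)

lemma ext_comp: "(\<And>x. x \<in> set w \<Longrightarrow> g x = ext p (q x)) \<Longrightarrow> ext g w = ext p (ext q w)"
  by (induction w) auto

lemma ext_nonempty: "w \<noteq> [] \<Longrightarrow> (\<forall>x\<in>set w. f x \<noteq> []) \<Longrightarrow> ext f w \<noteq> []"
  by (cases w) auto

lemma set_ext: "set (ext f w) = (\<Union>x\<in>set w. set (f x))"
  by (simp add: ext_def)

lemma sum_set_le_list: "(\<Sum>c\<in>set w. (f c::nat)) \<le> sum_list (map f w)"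
proof (induction w)
  case Nil then show ?case by simp
next
  case (Cons a w)
  have "(\<Sum>c\<in>set (a # w). f c) \<le> f a + (\<Sum>c\<in>set w. f c)"
    by (simp add: sum.insert_if)
  then show ?case using Cons by simp
qed

lemma length_ext: "length (ext p w) = sum_list (map (\<lambda>c. length (p c)) w)"
  by (induction w) auto

lemma size_less:
  assumes mq: "morphism D C q" and mp: "morphism C B p" and lo: "letter_onto D C q"
    and cd: "card C < card D"
  shows "size1 C p < size1 D (\<lambda>x. ext p (q x))"
proof -
  have fD: "finite D" and fC: "finite C" using mq by (auto simp: morphism_def)
  from lo obtain g where g: "\<forall>c\<in>C. g c \<in> D \<and> c \<in> set (q (g c))"
    unfolding letter_onto_def by metis
  have gC: "g ` C \<subseteq> D" using g by auto
  have "card (g ` C) < card D" using card_image_le[OF fC, of g] cd by linarith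
  then have "g ` C \<noteq> D" by auto
  then obtain x0 where x0: "x0 \<in> D" "x0 \<notin> g ` C" using gC by auto
  have qx0: "q x0 \<noteq> []" "set (q x0) \<subseteq> C" using mq x0 by (auto simp: morphism_def)
  have "ext p (q x0) \<noteq> []"
    using ext_nonempty[OF qx0(1)] qx0(2) mp by (auto simp: morphism_def)
  then have pos: "0 < length (ext p (q x0))" by simp
  have "size1 C p = (\<Sum>x\<in>g`C. \<Sum>c\<in>{c. c \<in> C \<and> g c = x}. length (p c))"
    unfolding size1_def using sum.image_gen[OF fC] by blast
  also have "\<dots> \<le> (\<Sum>x\<in>g`C. \<Sum>c\<in>set (q x). length (p c))"
    by (rule sum_mono, rule sum_mono2) (use g in auto)
  also have "\<dots> \<le> (\<Sum>x\<in>g`C. length (ext p (q x)))"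
    by (rule sum_mono) (simp add: length_ext sum_set_le_list)
  also have "\<dots> < length (ext p (q x0)) + (\<Sum>x\<in>g`C. length (ext p (q x)))"
    using pos by simp
  also have "\<dots> = (\<Sum>x\<in>insert x0 (g`C). length (ext p (q x)))"
    using x0 fC by simp
  also have "\<dots> \<le> (\<Sum>x\<in>D. length (ext p (q x)))"
    by (rule sum_mono2) (use fD x0 gC in auto)
  finally show ?thesis unfolding size1_def .
qed

lemma defect:
  fixes D :: "'d set" and \<tau> :: "'d \<Rightarrow> 'b list"
  assumes "morphism D B \<tau>" "U \<noteq> []" "V \<noteq> []" "set U \<subseteq> D" "set V \<subseteq> D"
    "ext \<tau> U = ext \<tau> V" "hd U \<noteq> hd V"
  shows "\<exists>C q p. C \<subseteq> D \<and> morphism D C q \<and> morphism C B p \<and> card C < card D \<and>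
           letter_onto D C q \<and> (\<forall>x\<in>D. \<tau> x = ext p (q x))"
  using assms
proof (induction "size1 D \<tau>" arbitrary: \<tau> U V rule: less_induct)
  case less
  have fD: "finite D" using less.prems(1) by (simp add: morphism_def)
  have key: "\<exists>C q p. C \<subseteq> D \<and> morphism D C q \<and> morphism C B p \<and> card C < card D \<and>
           letter_onto D C q \<and> (\<forall>x\<in>D. \<tau> x = ext p (q x))"
    if U: "U \<noteq> []" "set U \<subseteq> D" and V: "V \<noteq> []" "set V \<subseteq> D"
      and rel: "ext \<tau> U = ext \<tau> V" and hne: "hd U \<noteq> hd V"
      and pr: "prefix (\<tau> (hd U)) (\<tau> (hd V))" for U V
  proof -
    obtain x U' where Ux: "U = x # U'" using U by (cases U) auto
    obtain y V' where Vy: "V = y # V'" using V by (cases V) auto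
    have xy: "x \<noteq> y" using hne Ux Vy by simp
    have xD: "x \<in> D" and yD: "y \<in> D" using U V Ux Vy by auto
    have mor: "finite D" "finite B" "\<And>w. w \<in> D \<Longrightarrow> \<tau> w \<noteq> [] \<and> set (\<tau> w) \<subseteq> B"
      using less.prems(1) by (auto simp: morphism_def)
    from pr obtain z where z: "\<tau> y = \<tau> x @ z" using Ux Vy by (auto simp: prefix_def)
    show ?thesis
    proof (cases "z = []")
      case True
      define C where "C = D - {y}"
      define q where "q = (\<lambda>w. if w = y then [x] else [w])"
      have "C \<subseteq> D" unfolding C_def by auto
      moreover have "morphism D C q"
        unfolding morphism_def q_def C_def using mor xy xD by auto
      moreover have "morphism C B \<tau>"
        unfolding morphism_def C_def using mor by auto
      moreover have "card C < card D"
        unfolding C_def by (rule card_Diff1_less[OF fD yD])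
      moreover have "letter_onto D C q"
        unfolding letter_onto_def C_def q_def by auto
      moreover have "\<forall>w\<in>D. \<tau> w = ext \<tau> (q w)"
        unfolding q_def using z True by auto
      ultimately show ?thesis by blast
    next
      case False
      define \<tau>' where "\<tau>' = \<tau>(y := z)"
      define h where "h = (\<lambda>w. if w = y then [x, y] else [w])"
      have m': "morphism D B \<tau>'"
        unfolding morphism_def \<tau>'_def using mor False z
        by (auto) (metis Un_iff set_append subsetD)
      have tx: "\<tau> x \<noteq> []" using mor xD by auto
      have "size1 D \<tau>' = length (\<tau>' y) + (\<Sum>w\<in>D-{y}. length (\<tau>' w))"
        unfolding size1_def by (rule sum.remove[OF fD yD])
      also have "length (\<tau>' y) = length z" by (simp add: \<tau>'_def)
      also have "(\<Sum>w\<in>D-{y}. length (\<tau>' w)) = (\<Sum>w\<in>D-{y}. length (\<tau> w))"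
        by (rule sum.cong) (auto simp: \<tau>'_def)
      also have "length z + \<dots> < length (\<tau> y) + (\<Sum>w\<in>D-{y}. length (\<tau> w))"
        using z tx by simp
      also have "\<dots> = size1 D \<tau>"
        unfolding size1_def by (rule sum.remove[OF fD yD, symmetric])
      finally have smaller: "size1 D \<tau>' < size1 D \<tau>" .
      have th: "\<And>w. \<tau> w = ext \<tau>' (h w)"
        unfolding h_def \<tau>'_def using xy z by auto
      have exth: "\<And>W. ext \<tau> W = ext \<tau>' (ext h W)"
        by (rule ext_comp) (use th in auto)
      have "\<tau> x @ ext \<tau> U' = \<tau> x @ z @ ext \<tau> V'" using rel Ux Vy z by simp
      then have r1: "ext \<tau> U' = z @ ext \<tau> V'" by simp
      have U'ne: "U' \<noteq> []" using r1 False by auto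
      define U'' where "U'' = ext h U'"
      define V'' where "V'' = y # ext h V'"
      have rel'': "ext \<tau>' U'' = ext \<tau>' V''"
        unfolding U''_def V''_def using r1 exth[of U'] exth[of V'] by (simp add: \<tau>'_def)
      obtain w U2 where U'w: "U' = w # U2" using U'ne by (cases U') auto
      have hdU'': "hd U'' \<noteq> hd V''"
        unfolding U''_def V''_def U'w h_def using xy by auto
      have U''ne: "U'' \<noteq> []" unfolding U''_def U'w h_def by simp
      have sU'': "set U'' \<subseteq> D" unfolding U''_def set_ext h_def using U Ux xD by (auto split: if_splits)
      have sV'': "set V'' \<subseteq> D" unfolding V''_def using V Vy xD by (auto simp: set_ext h_def split: if_splits)
      from less.hyps[OF smaller m' U''ne _ sU'' sV'' rel'' hdU'']
      obtain C q p where C: "C \<subseteq> D" "morphism D C q" "morphism C B p" "card C < card D"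
        "letter_onto D C q" "\<forall>w\<in>D. \<tau>' w = ext p (q w)"
        unfolding V''_def by auto
      define q2 where "q2 = (\<lambda>w. ext q (h w))"
      have "morphism D C q2"
        using C(2) xD unfolding morphism_def q2_def h_def by (auto simp: set_ext)
      moreover have "letter_onto D C q2"
        using C(5) unfolding letter_onto_def q2_def h_def by (fastforce simp: set_ext)
      moreover have "\<forall>w\<in>D. \<tau> w = ext p (q2 w)"
      proof
        fix w assume wD: "w \<in> D"
        have "\<tau> w = ext \<tau>' (h w)" by (rule th)
        also have "\<dots> = ext p (ext q (h w))"
          by (rule ext_comp) (use C(6) wD xD in \<open>auto simp: h_def split: if_splits\<close>)
        finally show "\<tau> w = ext p (q2 w)" unfolding q2_def .
      qed
      ultimately show ?thesis using C by blast
    qed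
  qed
  have hU: "hd U \<in> set U" "hd V \<in> set V" using less.prems by auto
  have "prefix (\<tau> (hd U)) (ext \<tau> U)" "prefix (\<tau> (hd V)) (ext \<tau> V)"
    using less.prems(2,3) by (cases U; simp; cases V; simp)+
  then have "prefix (\<tau> (hd U)) (\<tau> (hd V)) \<or> prefix (\<tau> (hd V)) (\<tau> (hd U))"
    using less.prems(6) prefix_same_cases by metis
  then show ?case
  proof
    assume "prefix (\<tau> (hd U)) (\<tau> (hd V))"
    then show ?case using key less.prems by blast
  next
    assume "prefix (\<tau> (hd V)) (\<tau> (hd U))"
    then show ?case using key[of V U] less.prems by metis
  qed
qed


lemma rename:
  fixes A :: "'a set" and C :: "'c set" and q :: "'a \<Rightarrow> 'c list" and p :: "'c \<Rightarrow> 'b list"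
  assumes fA: "finite A" and mq: "morphism A C q" and mp: "morphism C B p"
    and lo: "letter_onto A C q" and cC: "card C \<le> card A"
    and sz: "size1 C p < N" and eq: "\<forall>x\<in>A. \<sigma> x = ext p (q x)"
  shows "\<exists>(C' :: 'a set) (q' :: 'a \<Rightarrow> 'a list) (p' :: 'a \<Rightarrow> 'b list).
           morphism A C' q' \<and> morphism C' B p' \<and>
           card C' \<le> card A \<and> letter_onto A C' q' \<and> size1 C' p' < N \<and>
           (\<forall>x\<in>A. \<sigma> x = ext p' (q' x))"
proof -
  have fC: "finite C" using mq by (simp add: morphism_def)
  obtain g where g: "g ` C \<subseteq> A" "inj_on g C" using card_le_inj[OF fC fA cC] by blast
  define C' where "C' = g ` C"
  define q' where "q' = (\<lambda>x. map g (q x))"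
  define p' where "p' = (\<lambda>c. p (the_inv_into C g c))"
  have pg: "\<And>c. c \<in> C \<Longrightarrow> p' (g c) = p c"
    unfolding p'_def using the_inv_into_f_f[OF g(2)] by simp
  have extg: "\<And>w. set w \<subseteq> C \<Longrightarrow> ext p' (map g w) = ext p w"
  proof -
    fix w :: "'c list" show "set w \<subseteq> C \<Longrightarrow> ext p' (map g w) = ext p w"
      by (induction w) (auto simp: pg)
  qed
  have "morphism A C' q'"
    using mq fA unfolding morphism_def C'_def q'_def by auto
  moreover have "morphism C' B p'"
    using mp unfolding morphism_def C'_def by (auto simp: pg)
  moreover have "card C' \<le> card A"
    unfolding C'_def using card_image[OF g(2)] cC by simp
  moreover have "letter_onto A C' q'"
    using lo unfolding letter_onto_def C'_def q'_def by fastforce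
  moreover have "size1 C' p' = size1 C p"
    unfolding size1_def C'_def using sum.reindex[OF g(2), of "\<lambda>c. length (p' c)"] pg by simp
  moreover have "\<forall>x\<in>A. \<sigma> x = ext p' (q' x)"
    using eq mq unfolding q'_def morphism_def by (auto simp: extg)
  ultimately show ?thesis using sz by metis
qed

definition tau :: "('a \<Rightarrow> 'b list) \<Rightarrow> 'a \<Rightarrow> 'b list \<Rightarrow> 'b list \<Rightarrow> 'a option \<Rightarrow> 'b list" where
  "tau \<sigma> x0 al ga z = (case z of None \<Rightarrow> ga | Some x \<Rightarrow> if x = x0 then al else \<sigma> x)"

definition hsplit :: "'a \<Rightarrow> 'a \<Rightarrow> 'a option list" where
  "hsplit x0 x = (if x = x0 then [Some x, None] else [Some x])"

lemma ext_tau_h: "\<sigma> x0 = al @ ga \<Longrightarrow> ext (tau \<sigma> x0 al ga) (ext (hsplit x0) W) = ext \<sigma> W"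
  by (induction W) (auto simp: tau_def hsplit_def)

lemma hd_ext_h: "W \<noteq> [] \<Longrightarrow> hd (ext (hsplit x0) W) = Some (hd W)"
  by (cases W) (auto simp: hsplit_def)

lemma ext_h_ne: "W \<noteq> [] \<Longrightarrow> ext (hsplit x0) W \<noteq> []"
  by (cases W) (auto simp: hsplit_def)

lemma set_ext_h: "set (ext (hsplit x0) W) \<subseteq> Some ` set W \<union> {None}"
  by (auto simp: set_ext hsplit_def split: if_splits)

lemma split_reduce:
  fixes A :: "'a set" and \<sigma> :: "'a \<Rightarrow> 'b list"
  assumes m: "morphism A B \<sigma>" and x0: "x0 \<in> A" and sp: "\<sigma> x0 = al @ ga" "al \<noteq> []" "ga \<noteq> []"
  and W: "W1 \<noteq> []" "W2 \<noteq> []" "set W1 \<subseteq> Some ` A \<union> {None}" "set W2 \<subseteq> Some ` A \<union> {None}"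
    "hd W1 \<noteq> hd W2"
  and rel: "ext (tau \<sigma> x0 al ga) W1 = ext (tau \<sigma> x0 al ga) W2"
  shows "\<exists>(C :: 'a set) (q :: 'a \<Rightarrow> 'a list) (p :: 'a \<Rightarrow> 'b list).
           morphism A C q \<and> morphism C B p \<and>
           card C \<le> card A \<and> letter_onto A C q \<and> size1 C p < size1 A \<sigma> \<and>
           (\<forall>x\<in>A. \<sigma> x = ext p (q x))"
proof -
  define D where "D = Some ` A \<union> {None}"
  define \<tau> where "\<tau> = tau \<sigma> x0 al ga"
  have fA: "finite A" and fB: "finite B" and mA: "\<And>x. x \<in> A \<Longrightarrow> \<sigma> x \<noteq> [] \<and> set (\<sigma> x) \<subseteq> B"
    using m by (auto simp: morphism_def)
  have fD: "finite D" unfolding D_def using fA by simp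
  have cD: "card D = card A + 1"
    unfolding D_def using fA by (simp add: card_image)
  have mt: "morphism D B \<tau>"
    unfolding morphism_def D_def \<tau>_def tau_def using fA fB mA sp x0
    by (auto) (metis Un_iff set_append subsetD)+
  obtain C q p where C: "C \<subseteq> D" "morphism D C q" "morphism C B p" "card C < card D"
    "letter_onto D C q" "\<forall>x\<in>D. \<tau> x = ext p (q x)"
    using defect[OF mt W(1,2) W(3,4)[folded D_def] rel[folded \<tau>_def] W(5)] by blast
  define q2 where "q2 = (\<lambda>x. ext q (hsplit x0 x))"
  have sl: "size1 C p < size1 D (\<lambda>x. ext p (q x))" by (rule size_less[OF C(2,3,5,4)])
  have "size1 D (\<lambda>x. ext p (q x)) = size1 D \<tau>"
    unfolding size1_def using C(6) by simp
  also have "size1 D \<tau> = (\<Sum>x\<in>Some ` A. length (\<tau> x)) + length ga"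
    unfolding size1_def D_def using fA by (simp add: \<tau>_def tau_def)
  also have "(\<Sum>x\<in>Some ` A. length (\<tau> x)) = (\<Sum>x\<in>A. length (\<tau> (Some x)))"
    by (simp add: sum.reindex)
  also have "\<dots> = length al + (\<Sum>x\<in>A-{x0}. length (\<sigma> x))"
    using sum.remove[OF fA x0, of "\<lambda>x. length (\<tau> (Some x))"]
    by (simp add: \<tau>_def tau_def) 
  also have "length al + (\<Sum>x\<in>A-{x0}. length (\<sigma> x)) + length ga = size1 A \<sigma>"
    unfolding size1_def using sum.remove[OF fA x0, of "\<lambda>x. length (\<sigma> x)"] sp by simp
  finally have sz: "size1 C p < size1 A \<sigma>" using sl by simp
  have "morphism A C q2"
    using C(2) fA x0 unfolding morphism_def q2_def D_def hsplit_def by (auto simp: set_ext)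
  moreover have "letter_onto A C q2"
    using C(5) x0 unfolding letter_onto_def q2_def D_def hsplit_def
    by (fastforce simp: set_ext)
  moreover have "\<forall>x\<in>A. \<sigma> x = ext p (q2 x)"
  proof
    fix x assume xA: "x \<in> A"
    have "\<sigma> x = ext \<tau> (hsplit x0 x)" using ext_tau_h[of \<sigma> x0 al ga "[x]", OF sp(1)] \<tau>_def by simp
    also have "\<dots> = ext p (ext q (hsplit x0 x))"
      by (rule ext_comp) (use C(6) xA in \<open>auto simp: D_def hsplit_def split: if_splits\<close>)
    finally show "\<sigma> x = ext p (q2 x)" unfolding q2_def .
  qed
  moreover have "card C \<le> card A" using C(4) cD by simp
  moreover have "finite C" using C(3) by (simp add: morphism_def)
  ultimately show ?thesis
    using rename[OF fA _ C(3) _ _ sz] by blast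
qed


fun locate :: "('a \<Rightarrow> 'b list) \<Rightarrow> nat \<Rightarrow> 'a list \<Rightarrow> 'a \<times> nat" where
  "locate \<sigma> k [] = (undefined, 0)"
| "locate \<sigma> k (y # v) = (if k \<le> length (\<sigma> y) then (y, k) else locate \<sigma> (k - length (\<sigma> y)) v)"

lemma locate_spec:
  "0 < k \<Longrightarrow> k \<le> length (ext \<sigma> v) \<Longrightarrow>
   \<exists>v1 v2. v = v1 @ fst (locate \<sigma> k v) # v2 \<and> k = length (ext \<sigma> v1) + snd (locate \<sigma> k v)
     \<and> 0 < snd (locate \<sigma> k v) \<and> snd (locate \<sigma> k v) \<le> length (\<sigma> (fst (locate \<sigma> k v)))"
proof (induction v arbitrary: k)
  case Nil then show ?case by simp
next
  case (Cons y v)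
  show ?case
  proof (cases "k \<le> length (\<sigma> y)")
    case True
    then show ?thesis using Cons.prems by (intro exI[of _ "[]"] exI[of _ v]) auto
  next
    case False
    then have "0 < k - length (\<sigma> y)" "k - length (\<sigma> y) \<le> length (ext \<sigma> v)"
      using Cons.prems by auto
    from Cons.IH[OF this] obtain v1 v2 where
      "v = v1 @ fst (locate \<sigma> (k - length (\<sigma> y)) v) # v2"
      "k - length (\<sigma> y) = length (ext \<sigma> v1) + snd (locate \<sigma> (k - length (\<sigma> y)) v)"
      "0 < snd (locate \<sigma> (k - length (\<sigma> y)) v)"
      "snd (locate \<sigma> (k - length (\<sigma> y)) v) \<le> length (\<sigma> (fst (locate \<sigma> (k - length (\<sigma> y)) v)))"
      by blast
    then show ?thesis using False by (intro exI[of _ "y # v1"] exI[of _ v2]) auto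
  qed
qed

lemma prefix_ext: "prefix x y \<Longrightarrow> prefix (ext \<sigma> x) (ext \<sigma> y)"
  by (auto simp: prefix_def)

lemma prefix_eqlen: "prefix x W \<Longrightarrow> prefix y W \<Longrightarrow> length x = length y \<Longrightarrow> x = y"
  by (metis prefix_length_prefix prefix_order.antisym order_refl)

theorem lemma3p4:
  fixes A :: "'a set" and B :: "'b set" and \<sigma> :: "'a \<Rightarrow> 'b list"
    and u v :: "'a list" and s t :: "'b list"
  assumes "morphism A B \<sigma>"
    and "u \<noteq> []" "set u \<subseteq> A" "v \<noteq> []" "set v \<subseteq> A"
    and "\<sigma> (hd u) = s @ t" "t \<noteq> []"
    and "prefix (ext \<sigma> u) (s @ ext \<sigma> v)"
    and "length u \<ge> size1 A \<sigma> + length s"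
    and "(s = [] \<and> hd u \<noteq> hd v) \<or> s \<noteq> []"
  shows "\<exists>(C :: 'a set) (q :: 'a \<Rightarrow> 'a list) (p :: 'a \<Rightarrow> 'b list).
           morphism A C q \<and> morphism C B p \<and>
           card C \<le> card A \<and> letter_onto A C q \<and> size1 C p < size1 A \<sigma> \<and>
           (\<forall>x\<in>A. \<sigma> x = ext p (q x))"
proof -
  note m = assms(1)
  have fA: "finite A" and mA: "\<And>x. x \<in> A \<Longrightarrow> \<sigma> x \<noteq> [] \<and> set (\<sigma> x) \<subseteq> B"
    using m by (auto simp: morphism_def)
  obtain a u' where u: "u = a # u'" using assms(2) by (cases u) auto
  obtain b v' where v: "v = b # v'" using assms(4) by (cases v) auto
  have aA: "a \<in> A" and bA: "b \<in> A" using assms(3,5) u v by auto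
  have sa: "\<sigma> a = s @ t" using assms(6) u by simp
  show ?thesis
  proof (cases "s = []")
    case True
    then have ab: "a \<noteq> b" using assms(10) u v by auto
    have comp: "?thesis" if xy: "x \<in> A" "y \<in> A" "x \<noteq> y" and pr: "prefix (\<sigma> x) (\<sigma> y)" for x y
    proof -
      obtain z where z: "\<sigma> y = \<sigma> x @ z" using pr by (auto simp: prefix_def)
      show ?thesis
      proof (cases "z = []")
        case True
        have "ext \<sigma> [x] = ext \<sigma> [y]" using z True by simp
        from defect[OF m _ _ _ _ this] xy
        obtain C q p where C: "C \<subseteq> A" "morphism A C q" "morphism C B p" "card C < card A"
          "letter_onto A C q" "\<forall>x\<in>A. \<sigma> x = ext p (q x)" by auto
        have "size1 C p < size1 A (\<lambda>x. ext p (q x))" by (rule size_less[OF C(2,3,5,4)])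
        also have "size1 A (\<lambda>x. ext p (q x)) = size1 A \<sigma>"
          unfolding size1_def using C(6) by simp
        finally show ?thesis using C by (intro exI[of _ C] exI[of _ q] exI[of _ p]) auto
      next
        case False
        show ?thesis
        proof (rule split_reduce[OF m xy(2) z _ False, of "[Some x]" "[Some y]"])
          show "\<sigma> x \<noteq> []" using mA xy by auto
          show "ext (tau \<sigma> y (\<sigma> x) z) [Some x] = ext (tau \<sigma> y (\<sigma> x) z) [Some y]"
            using xy by (simp add: tau_def)
        qed (use xy in auto)
      qed
    qed
    have "prefix (\<sigma> a) (ext \<sigma> v)"
      using assms(8) True u by (auto simp: prefix_def)
    moreover have "prefix (\<sigma> b) (ext \<sigma> v)" using v by simp
    ultimately have "prefix (\<sigma> a) (\<sigma> b) \<or> prefix (\<sigma> b) (\<sigma> a)" by (rule prefix_same_cases)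
    then show ?thesis using comp aA bA ab by metis
  next
    case False
    define W where "W = s @ ext \<sigma> v"
    define P where "P = (\<lambda>i. length (ext \<sigma> (take i u)))"
    define f where "f = (\<lambda>i. locate \<sigma> (P i - length s) v)"
    have pre: "prefix (ext \<sigma> u) W" using assms(8) W_def by simp
    have ptake: "prefix (ext \<sigma> (take i u)) W" for i
    proof -
      have "ext \<sigma> u = ext \<sigma> (take i u) @ ext \<sigma> (drop i u)"
        by (metis append_take_drop_id ext_simps(3))
      then have "prefix (ext \<sigma> (take i u)) (ext \<sigma> u)" by (metis prefixI)
      then show ?thesis using pre by (rule prefix_order.trans)
    qed
    have takeu: "take i u = a # take (i - 1) u'" if "1 \<le> i" for i
      using that u by (cases i) auto
    have Pgt: "length s < P i" if "1 \<le> i" for i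
      unfolding P_def takeu[OF that] using sa assms(7) by simp
    have Ple: "P i \<le> length s + length (ext \<sigma> v)" for i
      using prefix_length_le[OF ptake[of i]] unfolding P_def W_def by simp
    have loc: "\<exists>v1 v2. v = v1 @ fst (f i) # v2 \<and> P i - length s = length (ext \<sigma> v1) + snd (f i)
       \<and> 0 < snd (f i) \<and> snd (f i) \<le> length (\<sigma> (fst (f i)))" if "1 \<le> i" for i
      unfolding f_def by (rule locate_spec) (use Pgt[OF that] Ple[of i] in auto)
    have fS: "f i \<in> Sigma A (\<lambda>y. {1..length (\<sigma> y)})" if "1 \<le> i" for i
    proof -
      from loc[OF that] obtain v1 v2 where "v = v1 @ fst (f i) # v2" "0 < snd (f i)"
        "snd (f i) \<le> length (\<sigma> (fst (f i)))" by blast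
      then show ?thesis using assms(5) by (cases "f i") auto
    qed
    show ?thesis
    proof (cases "\<exists>i. 1 \<le> i \<and> i \<le> length u \<and> snd (f i) = length (\<sigma> (fst (f i)))")
      case True
      then obtain i where i: "1 \<le> i" "i \<le> length u" "snd (f i) = length (\<sigma> (fst (f i)))"
        by blast
      define y where "y = fst (f i)"
      obtain v1 v2 where v12: "v = v1 @ y # v2" "P i - length s = length (ext \<sigma> v1) + length (\<sigma> y)"
        using loc[OF i(1)] i(3) unfolding y_def by metis
      have yA: "y \<in> A" using v12 assms(5) by auto
      have "prefix (s @ ext \<sigma> (v1 @ [y])) W" unfolding W_def v12 by simp
      moreover have "length (ext \<sigma> (take i u)) = length (s @ ext \<sigma> (v1 @ [y]))"
        using v12(2) Pgt[OF i(1)] unfolding P_def by simp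
      ultimately have "ext \<sigma> (take i u) = s @ ext \<sigma> (v1 @ [y])"
        using prefix_eqlen ptake by blast
      then have r: "t @ ext \<sigma> (take (i - 1) u') = ext \<sigma> (v1 @ [y])"
        using takeu[OF i(1)] sa by simp
      define u1 where "u1 = take (i - 1) u'"
      have su1: "set u1 \<subseteq> A" using assms(3) u unfolding u1_def
        by (meson order_trans set_subset_Cons set_take_subset)
      have sv1: "set (v1 @ [y]) \<subseteq> A" using assms(5) v12 by auto
      show ?thesis
      proof (rule split_reduce[OF m aA sa False assms(7),
            of "None # ext (hsplit a) u1" "ext (hsplit a) (v1 @ [y])"])
        show "ext (hsplit a) (v1 @ [y]) \<noteq> []" by (rule ext_h_ne) simp
        show "set (None # ext (hsplit a) u1) \<subseteq> Some ` A \<union> {None}"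
          using set_ext_h[of a u1] su1 by auto
        show "set (ext (hsplit a) (v1 @ [y])) \<subseteq> Some ` A \<union> {None}"
          using set_ext_h[of a "v1 @ [y]"] sv1 by auto
        show "hd (None # ext (hsplit a) u1) \<noteq> hd (ext (hsplit a) (v1 @ [y]))"
          by (subst hd_ext_h) auto
        show "ext (tau \<sigma> a s t) (None # ext (hsplit a) u1) =
              ext (tau \<sigma> a s t) (ext (hsplit a) (v1 @ [y]))"
        proof -
          have "ext (tau \<sigma> a s t) (None # ext (hsplit a) u1) = t @ ext (tau \<sigma> a s t) (ext (hsplit a) u1)"
            by (simp add: tau_def)
          also have "\<dots> = t @ ext \<sigma> u1" by (simp only: ext_tau_h[of \<sigma> a s t, OF sa])
          also have "\<dots> = ext \<sigma> (v1 @ [y])" using r unfolding u1_def .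
          also have "\<dots> = ext (tau \<sigma> a s t) (ext (hsplit a) (v1 @ [y]))"
            by (simp only: ext_tau_h[of \<sigma> a s t, OF sa])
          finally show ?thesis .
        qed
      qed simp
    next
      case nc: False
      have "\<not> inj_on f {1..length u}"
      proof
        assume inj: "inj_on f {1..length u}"
        have fin: "finite (Sigma A (\<lambda>y. {1..length (\<sigma> y)}))" using fA by auto
        have "card {1..length u} \<le> card (Sigma A (\<lambda>y. {1..length (\<sigma> y)}))"
          by (rule card_inj_on_le[OF inj _ fin]) (use fS in force)
        also have "\<dots> = size1 A \<sigma>" unfolding size1_def using fA by simp
        finally have "length u \<le> size1 A \<sigma>" by simp
        moreover have "length s > 0" using False by simp
        ultimately show False using assms(9) by linarith
      qed
      then obtain i j where ij: "i \<in> {1..length u}" "j \<in> {1..length u}" "i \<noteq> j" "f i = f j"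
        unfolding inj_on_def by blast
      obtain i i' where ii: "1 \<le> i" "i < i'" "i' \<le> length u" "f i = f i'"
      proof (cases "i < j")
        case True then show ?thesis using that[of i j] ij by auto
      next
        case False then show ?thesis using that[of j i] ij by auto
      qed
      define y where "y = fst (f i)"
      define d where "d = snd (f i)"
      obtain v1 v2 where v12: "v = v1 @ y # v2" "P i - length s = length (ext \<sigma> v1) + d"
        "0 < d" "d \<le> length (\<sigma> y)"
        using loc[OF ii(1)] unfolding y_def d_def by metis
      obtain v1' v2' where v12': "v = v1' @ y # v2'" "P i' - length s = length (ext \<sigma> v1') + d"
        using loc[of i'] ii unfolding y_def d_def by fastforce
      have dlt: "d < length (\<sigma> y)" using nc ii v12(4) unfolding y_def d_def by force
      have yA: "y \<in> A" using v12 assms(5) by auto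
      define U0 where "U0 = take (i' - i) (drop i u)"
      have tk: "take i' u = take i u @ U0"
        unfolding U0_def using ii by (metis le_add_diff_inverse less_imp_le take_add)
      have U0ne: "U0 \<noteq> []" unfolding U0_def using ii by simp
      have sU0: "set U0 \<subseteq> A" unfolding U0_def using assms(3)
        by (meson order_trans set_drop_subset set_take_subset)
      have "ext \<sigma> U0 \<noteq> []" using ext_nonempty[OF U0ne] sU0 mA by auto
      then have Plt: "P i < P i'" unfolding P_def tk by simp
      then have lv: "length (ext \<sigma> v1) < length (ext \<sigma> v1')"
        using v12(2) v12'(2) Pgt[OF ii(1)] by linarith
      have "prefix v1 v" "prefix v1' v" using v12(1) v12'(1) by (metis prefixI)+
      then have "prefix v1 v1' \<or> prefix v1' v1" by (rule prefix_same_cases)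
      moreover have "\<not> prefix v1' v1"
        using prefix_length_le[OF prefix_ext[of v1' v1 \<sigma>]] lv by auto
      ultimately obtain r where r: "v1' = v1 @ r" by (auto simp: prefix_def)
      have "r \<noteq> []" using r lv by auto
      then obtain c V0' where rc: "r = c # V0'" by (cases r) auto
      have "y # v2 = r @ y # v2'" using v12(1) v12'(1) r by simp
      then have cy: "c = y" using rc by simp
      define al where "al = take d (\<sigma> y)"
      define ga where "ga = drop d (\<sigma> y)"
      have sy: "\<sigma> y = al @ ga" unfolding al_def ga_def by simp
      have lal: "length al = d" unfolding al_def using v12(4) by simp
      have alne: "al \<noteq> []" using lal v12(3) by auto
      have gane: "ga \<noteq> []" unfolding ga_def using dlt by simp
      have e1: "ext \<sigma> (take i u) = s @ ext \<sigma> v1 @ al"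
      proof (rule prefix_eqlen[OF ptake])
        show "prefix (s @ ext \<sigma> v1 @ al) W" unfolding W_def v12(1) by (simp add: sy)
        show "length (ext \<sigma> (take i u)) = length (s @ ext \<sigma> v1 @ al)"
          using v12(2) Pgt[OF ii(1)] lal unfolding P_def by simp
      qed
      have e2: "ext \<sigma> (take i' u) = s @ ext \<sigma> v1' @ al"
      proof (rule prefix_eqlen[OF ptake])
        show "prefix (s @ ext \<sigma> v1' @ al) W" unfolding W_def v12'(1) by (simp add: sy)
        show "length (ext \<sigma> (take i' u)) = length (s @ ext \<sigma> v1' @ al)"
          using v12'(2) Pgt[of i'] ii lal unfolding P_def by simp
      qed
      have "s @ ext \<sigma> v1 @ al @ ext \<sigma> U0 = s @ ext \<sigma> v1 @ al @ ga @ ext \<sigma> V0' @ al"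
        using e1 e2 tk r rc cy sy by simp
      then have rel: "ext \<sigma> U0 = ga @ ext \<sigma> V0' @ al" by simp
      have sV0: "set V0' \<subseteq> A" using assms(5) v12'(1) r rc by auto
      show ?thesis
      proof (rule split_reduce[OF m yA sy alne gane,
            of "ext (hsplit y) U0" "None # ext (hsplit y) V0' @ [Some y]"])
        show "ext (hsplit y) U0 \<noteq> []" by (rule ext_h_ne[OF U0ne])
        show "set (ext (hsplit y) U0) \<subseteq> Some ` A \<union> {None}"
          using set_ext_h[of y U0] sU0 by auto
        show "set (None # ext (hsplit y) V0' @ [Some y]) \<subseteq> Some ` A \<union> {None}"
          using set_ext_h[of y V0'] sV0 yA by auto
        show "hd (ext (hsplit y) U0) \<noteq> hd (None # ext (hsplit y) V0' @ [Some y])"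
          by (simp add: hd_ext_h[OF U0ne])
        show "ext (tau \<sigma> y al ga) (ext (hsplit y) U0) =
              ext (tau \<sigma> y al ga) (None # ext (hsplit y) V0' @ [Some y])"
        proof -
          have "ext (tau \<sigma> y al ga) (ext (hsplit y) U0) = ext \<sigma> U0" by (simp only: ext_tau_h[of \<sigma> y al ga, OF sy])
          also have "\<dots> = ga @ ext \<sigma> V0' @ al" by (rule rel)
          also have "\<dots> = ga @ ext (tau \<sigma> y al ga) (ext (hsplit y) V0') @ al"
            by (simp only: ext_tau_h[of \<sigma> y al ga, OF sy])
          also have "\<dots> = ext (tau \<sigma> y al ga) (None # ext (hsplit y) V0' @ [Some y])"
            by (simp add: tau_def)
          finally show ?thesis .
        qed
      qed simp
    qed
  qed
qed

end
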